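(* Let $L$ be a subspace of $\bigwedge^{k}V$ and let $I\subseteq[n]$. Suppose $N_{j\to i}L=L$ for all $i<j$ with $i,j\in I$. Then for each $x\in\bigwedge V^{(I)}$, the family of variable sets of those monomials $y\in\bigwedge V^{([n]\setminus I)}$ with $x\wedge y\in L$ is a shifted set system (with respect to $I$).
   Context: $\mathbb{F}$ is a field (assumed throughout the paper, for expository purposes, to have characteristic not $2$), $V$ is an $n$-dimensional $\mathbb{F}$-vector space with a fixed basis $e_1,\dots,e_n$, and $\bigwedge V$ its exterior algebra; for $S=\{s_1<\cdots<s_r\}\subseteq[n]$, the monomial $e_S=e_{s_1}\wedge\cdots\wedge e_{s_r}$ has variable set $S$, and the monomials with $|S|=k$ form a basis of $\bigwedge^kV$. For $J\subseteq[n]$, $V^{(J)}$ is the span of $\{e_h:h\notin J\}$ (so $V^{([n]\setminus I)}$ is spanned by $\{e_h:h\in I\}$), $V^{(j)}=V^{(\{j\})}$, and $\bigwedge V^{(J)}$ is viewed as a subalgebra of $\bigwedge V$. Slow shift: for distinct $i,j\in[n]$ and nonzero $m\in\bigwedge^kV$, write uniquely $m=x'+e_j\wedge y'$ with $x'\in\bigwedge^kV^{(j)}$, $y'\in\bigwedge^{k-1}V^{(j)}$, and set $N_{j\to i}m=x'+e_i\wedge y'$ if this is nonzero, and $N_{j\to i}m=e_j\wedge y'$ otherwise (the limit as $t\to0$ of the projective action of $e_j\mapsto e_i+te_j$, fixing the other $e_h$). For a subspace $L$, $N_{j\to i}L$ is the span of $\{N_{j\to i}m:m\in L\setminus\{0\}\}$.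 A family $\mathcal{F}$ of subsets of $I$ is shifted (with respect to $I$) if for all $i<j$ in $I$ and every $F\in\mathcal{F}$ with $j\in F$, $i\notin F$, also $(F\setminus\{j\})\cup\{i\}\in\mathcal{F}$. *)

theory Defs
  imports Main
begin

text \<open>An element of the exterior algebra is represented by its coefficient function
on variable sets: f S is the coefficient of the monomial e_S.\<close>

definition ext_alg :: "nat \<Rightarrow> (nat set \<Rightarrow> 'a::field) set" where
  "ext_alg n = {f. \<forall>S. f S \<noteq> 0 \<longrightarrow> S \<subseteq> {1..n}}"

definition ext_deg :: "nat \<Rightarrow> nat \<Rightarrow> (nat set \<Rightarrow> 'a::field) set" where
  "ext_deg n k = {f \<in> ext_alg n. \<forall>S. f S \<noteq> 0 \<longrightarrow> card S = k}"

text \<open>The subalgebra generated by the e_h with h in [n] not in J (i.e. of V^(J)).\<close>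
definition ext_sub :: "nat \<Rightarrow> nat set \<Rightarrow> (nat set \<Rightarrow> 'a::field) set" where
  "ext_sub n J = {f. \<forall>S. f S \<noteq> 0 \<longrightarrow> S \<subseteq> {1..n} - J}"

definition monom :: "nat set \<Rightarrow> (nat set \<Rightarrow> 'a::field)" where
  "monom S = (\<lambda>T. if T = S then 1 else 0)"

text \<open>Sign of e_S wedge e_T = sign * e_(S union T) for disjoint S, T.\<close>
definition wsign :: "nat set \<Rightarrow> nat set \<Rightarrow> 'a::field" where
  "wsign S T = (-1) ^ card {(s, t). s \<in> S \<and> t \<in> T \<and> t < s}"

definition wedge :: "(nat set \<Rightarrow> 'a::field) \<Rightarrow> (nat set \<Rightarrow> 'a) \<Rightarrow> (nat set \<Rightarrow> 'a)" where
  "wedge x y = (\<lambda>U. \<Sum>S\<in>{S. S \<subseteq> U}. wsign S (U - S) * x S * y (U - S))"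

definition is_subspace :: "(nat set \<Rightarrow> 'a::field) set \<Rightarrow> bool" where
  "is_subspace L \<longleftrightarrow> (\<lambda>S. 0) \<in> L \<and> (\<forall>x\<in>L. \<forall>y\<in>L. (\<lambda>S. x S + y S) \<in> L) \<and> (\<forall>c. \<forall>x\<in>L. (\<lambda>S. c * x S) \<in> L)"

definition lin_span :: "(nat set \<Rightarrow> 'a::field) set \<Rightarrow> (nat set \<Rightarrow> 'a) set" where
  "lin_span M = {v. \<exists>A c. finite A \<and> A \<subseteq> M \<and> v = (\<lambda>S. \<Sum>m\<in>A. c m * m S)}"

text \<open>Slow shift N_{j->i} of an element m: m = x' + e_j wedge y' with x', y' free of e_j.\<close>
definition slow_shift :: "nat \<Rightarrow> nat \<Rightarrow> (nat set \<Rightarrow> 'a::field) \<Rightarrow> (nat set \<Rightarrow> 'a)" where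
  "slow_shift j i m =
     (let x' = (\<lambda>S. if j \<in> S then 0 else m S);
          y' = (\<lambda>T. if j \<in> T then 0 else wsign {j} T * m (insert j T));
          r = (\<lambda>S. x' S + wedge (monom {i}) y' S)
      in if r \<noteq> (\<lambda>S. 0) then r else wedge (monom {j}) y')"

definition slow_shift_space :: "nat \<Rightarrow> nat \<Rightarrow> (nat set \<Rightarrow> 'a::field) set \<Rightarrow> (nat set \<Rightarrow> 'a) set" where
  "slow_shift_space j i L = lin_span {slow_shift j i m | m. m \<in> L \<and> m \<noteq> (\<lambda>S. 0)}"

definition shifted_wrt :: "nat set \<Rightarrow> nat set set \<Rightarrow> bool" where
  "shifted_wrt I F \<longleftrightarrow> (\<forall>i\<in>I. \<forall>j\<in>I. i < j \<longrightarrow>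
      (\<forall>A\<in>F. j \<in> A \<longrightarrow> i \<notin> A \<longrightarrow> insert i (A - {j}) \<in> F))"

end

theory Submission imports Defs begin

definition sg :: "nat \<Rightarrow> nat \<Rightarrow> 'a::field" where "sg s t = (if t < s then -1 else 1)"

lemma pow_card_filter:
  assumes "finite A"
  shows "(-1::'a::field) ^ card {p\<in>A. P p} = (\<Prod>p\<in>A. if P p then -1 else 1)"
proof -
  have "(\<Prod>p\<in>A. if P p then (-1::'a) else 1) = (\<Prod>p\<in>{p\<in>A. P p}. -1)"
    using prod.inter_filter[OF assms, of "\<lambda>_. (-1::'a)" P] by simp
  thus ?thesis by simp
qed

lemma wsign_prod:
  assumes "finite S" "finite T"
  shows "(wsign S T :: 'a::field) = (\<Prod>s\<in>S. \<Prod>t\<in>T. sg s t)"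
proof -
  have eq: "{(s, t). s \<in> S \<and> t \<in> T \<and> t < s} = {p\<in>S\<times>T. snd p < fst p}" by auto
  have "(wsign S T :: 'a) = (\<Prod>p\<in>S\<times>T. if snd p < fst p then -1 else 1)"
    unfolding wsign_def eq using assms by (simp add: pow_card_filter)
  also have "\<dots> = (\<Prod>(s,t)\<in>S\<times>T. sg s t)"
    by (rule prod.cong) (auto simp: sg_def)
  also have "\<dots> = (\<Prod>s\<in>S. \<Prod>t\<in>T. sg s t)"
    by (rule prod.cartesian_product[symmetric])
  finally show ?thesis .
qed

lemma wedge_monom_right:
  "wedge x (monom T) U = (if finite U \<and> T \<subseteq> U then wsign (U-T) T * x (U-T) else 0)"
proof (cases "finite U")
  case False
  hence "infinite {S. S \<subseteq> U}" using finite_Pow_iff[of U] by (simp add: Pow_def)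
  thus ?thesis using False unfolding wedge_def by simp
next
  case True
  have "wedge x (monom T) U = (\<Sum>S\<in>{S. S \<subseteq> U}. if S = U - T \<and> T \<subseteq> U then wsign S (U - S) * x S else 0)"
    unfolding wedge_def monom_def by (rule sum.cong) auto
  also have "\<dots> = (\<Sum>S\<in>{S. S \<subseteq> U}. if S = U - T then (if T \<subseteq> U then wsign S (U - S) * x S else 0) else 0)"
    by (rule sum.cong) auto
  also have "\<dots> = (if T \<subseteq> U then wsign (U-T) (U - (U-T)) * x (U-T) else 0)"
    using True by (subst sum.delta) auto
  also have "\<dots> = (if finite U \<and> T \<subseteq> U then wsign (U-T) T * x (U-T) else 0)"
    using True by (auto simp: double_diff)
  finally show ?thesis .
qed

lemma wedge_monom_left:
  "wedge (monom {i}) y U = (if finite U \<and> i \<in> U then wsign {i} (U-{i}) * y (U-{i}) else 0)"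
proof (cases "finite U")
  case False
  hence "infinite {S. S \<subseteq> U}" using finite_Pow_iff[of U] by (simp add: Pow_def)
  thus ?thesis using False unfolding wedge_def by simp
next
  case True
  have "wedge (monom {i}) y U = (\<Sum>S\<in>{S. S \<subseteq> U}. if S = {i} then wsign S (U - S) * y (U - S) else 0)"
    unfolding wedge_def monom_def by (rule sum.cong) auto
  also have "\<dots> = (if {i} \<subseteq> U then wsign {i} (U - {i}) * y (U - {i}) else 0)"
    using True by (subst sum.delta) auto
  finally show ?thesis using True by simp
qed

lemma sign_id:
  assumes "finite S" "finite R" "S \<inter> R = {}" "i \<notin> S" "j \<notin> S" "i \<notin> R" "j \<notin> R" "i \<noteq> j"
  shows "(wsign S (insert i R) :: 'a::field) =
    (\<Prod>t\<in>R. sg i t * sg j t) * (wsign {i} (S\<union>R) * (wsign {j} (S\<union>R) * wsign S (insert j R)))"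
proof -
  define P :: 'a where "P = (\<Prod>s\<in>S. \<Prod>t\<in>R. sg s t)"
  have e1: "(wsign S (insert i R) :: 'a) = (\<Prod>s\<in>S. sg s i) * P"
    using assms by (simp add: wsign_prod P_def prod.distrib)
  have e2: "(wsign S (insert j R) :: 'a) = (\<Prod>s\<in>S. sg s j) * P"
    using assms by (simp add: wsign_prod P_def prod.distrib)
  have e3: "(wsign {i} (S\<union>R) :: 'a) = (\<Prod>s\<in>S. sg i s) * (\<Prod>t\<in>R. sg i t)"
    using assms by (simp add: wsign_prod prod.union_disjoint)
  have e4: "(wsign {j} (S\<union>R) :: 'a) = (\<Prod>s\<in>S. sg j s) * (\<Prod>t\<in>R. sg j t)"
    using assms by (simp add: wsign_prod prod.union_disjoint)
  have e5: "(\<Prod>s\<in>S. sg s i :: 'a) = (\<Prod>s\<in>S. sg i s) * (\<Prod>s\<in>S. sg j s) * (\<Prod>s\<in>S. sg s j)"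
  proof -
    have "(\<Prod>s\<in>S. sg s i :: 'a) = (\<Prod>s\<in>S. sg i s * sg j s * sg s j)"
      using assms by (intro prod.cong) (auto simp: sg_def)
    thus ?thesis by (simp add: prod.distrib)
  qed
  have e6: "(\<Prod>t\<in>R. sg i t * sg j t :: 'a) * ((\<Prod>t\<in>R. sg i t) * (\<Prod>t\<in>R. sg j t)) = 1"
  proof -
    have "(\<Prod>t\<in>R. sg i t * sg j t :: 'a) * ((\<Prod>t\<in>R. sg i t) * (\<Prod>t\<in>R. sg j t))
       = (\<Prod>t\<in>R. (sg i t * sg j t) * (sg i t * sg j t))" by (simp add: prod.distrib)
    also have "\<dots> = (\<Prod>t\<in>R. 1)" by (intro prod.cong) (auto simp: sg_def)
    finally show ?thesis by simp
  qed
  show ?thesis unfolding e1 e2 e3 e4 e5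
    using e6 by (simp add: algebra_simps)
qed

lemma monom_ext_sub: "(monom T :: nat set \<Rightarrow> 'b::field) \<in> ext_sub n J \<longleftrightarrow> T \<subseteq> {1..n} - J"
proof
  assume "(monom T :: nat set \<Rightarrow> 'b::field) \<in> ext_sub n J"
  then have "monom T T \<noteq> (0::'b) \<longrightarrow> T \<subseteq> {1..n} - J" unfolding ext_sub_def by blast
  thus "T \<subseteq> {1..n} - J" by (simp add: monom_def)
next
  assume "T \<subseteq> {1..n} - J"
  thus "(monom T :: nat set \<Rightarrow> 'b::field) \<in> ext_sub n J" unfolding ext_sub_def monom_def by simp
qed

theorem proposition3p12:
  fixes n k :: nat and I :: "nat set" and L :: "(nat set \<Rightarrow> 'a::field) set"
    and x :: "nat set \<Rightarrow> 'a"
  assumes char: "(2::'a) \<noteq> 0"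
    and I: "I \<subseteq> {1..n}"
    and Lsub: "is_subspace L" "L \<subseteq> ext_deg n k"
    and shiftinv: "\<forall>i\<in>I. \<forall>j\<in>I. i < j \<longrightarrow> slow_shift_space j i L = L"
    and x: "x \<in> ext_sub n I"
  shows "shifted_wrt I {T. monom T \<in> ext_sub n ({1..n} - I) \<and> wedge x (monom T) \<in> L}"
  unfolding shifted_wrt_def
proof (intro ballI impI)
  fix i j T
  assume i: "i \<in> I" and j: "j \<in> I" and ij: "i < j"
    and TF: "T \<in> {T. monom T \<in> ext_sub n ({1..n} - I) \<and> wedge x (monom T) \<in> L}"
    and jT: "j \<in> T" and iT: "i \<notin> T"
  have TI: "T \<subseteq> I" using TF by (auto simp: monom_ext_sub)
  have mL: "wedge x (monom T) \<in> L" using TF by simp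
  have "T \<subseteq> {1..n}" using TI I by blast
  then have fT: "finite T" using finite_subset by blast
  have xs: "\<And>S. x S \<noteq> 0 \<Longrightarrow> S \<subseteq> {1..n} - I" using x unfolding ext_sub_def by auto
  define m where "m = wedge x (monom T)"
  define R where "R = T - {j}"
  define T' where "T' = insert i R"
  define c :: 'a where "c = (\<Prod>t\<in>R. sg i t * sg j t)"
  define x' where "x' = (\<lambda>S. if j \<in> S then 0 else m S)"
  define y' where "y' = (\<lambda>T. if j \<in> T then 0 else wsign {j} T * m (insert j T))"
  define r where "r = (\<lambda>S. x' S + wedge (monom {i}) y' S)"
  have TR: "T = insert j R" using jT R_def by auto
  have fR: "finite R" using fT R_def by simp
  have iR: "i \<notin> R" "j \<notin> R" using iT R_def by auto
  have T'I: "T' \<subseteq> I" using TI i T'_def R_def by auto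
  have x'0: "\<And>U. x' U = 0"
  proof -
    fix U
    show "x' U = 0"
    proof (cases "j \<in> U")
      case False
      then have "\<not> T \<subseteq> U" using jT by blast
      then show ?thesis unfolding x'_def m_def wedge_monom_right using False by simp
    qed (simp add: x'_def)
  qed
  have key: "wedge x (monom T') U = c * r U" for U
  proof (cases "finite U \<and> T' \<subseteq> U \<and> j \<notin> U \<and> x (U - T') \<noteq> 0")
    case True
    define S where "S = U - T'"
    have SI: "S \<subseteq> {1..n} - I" unfolding S_def by (rule xs) (use True in simp)
    have fS: "finite S" unfolding S_def using True by simp
    have U: "U = S \<union> T'" unfolding S_def using True by auto
    have RU: "R \<subseteq> U" "i \<in> U" using True T'_def by auto
    have Ui: "U - {i} = S \<union> R" unfolding S_def T'_def using RU iR by auto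
    have jS: "j \<notin> S" using SI j by auto
    have W: "insert j (S \<union> R) - T = S" unfolding TR using jS iR SI TI TR by blast
    have c1: "j \<notin> S \<union> R" "finite (insert j (S \<union> R))" "T \<subseteq> insert j (S \<union> R)"
      using jS iR fS fR TR by auto
    have "wedge x (monom T') U = wsign S T' * x S"
      using True by (simp add: wedge_monom_right S_def)
    moreover have "r U = wsign {i} (S \<union> R) * (wsign {j} (S \<union> R) * (wsign S T * x S))"
      unfolding r_def x'0 wedge_monom_left y'_def m_def wedge_monom_right
      using True RU by (simp add: Ui W c1 fS fR jS iR)
    moreover have d: "S \<inter> R = {}" "i \<notin> S" using SI TI TR i j by auto
    moreover have "i \<noteq> j" using ij by simp
    ultimately show ?thesis
      using sign_id[OF fS fR d(1) d(2) jS iR(1) iR(2), where 'a='a] TR T'_def c_def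
      by (simp add: algebra_simps)
  next
    case False
    have lhs: "wedge x (monom T') U = 0"
    proof -
      have "j \<notin> T'" using T'_def iR ij by auto
      then have "finite U \<Longrightarrow> T' \<subseteq> U \<Longrightarrow> j \<in> U \<Longrightarrow> x (U - T') = 0"
        using xs j by blast
      thus ?thesis using False by (auto simp: wedge_monom_right)
    qed
    have "r U = 0"
    proof (cases "finite U \<and> i \<in> U \<and> j \<notin> U \<and> T \<subseteq> insert j (U - {i})")
      case True
      have "T' \<subseteq> U" using True T'_def TR iR by auto
      moreover have "insert j (U - {i}) - T = U - T'" using True T'_def TR iR ij by auto
      ultimately have "x (insert j (U - {i}) - T) = 0" using False True by auto
      thus ?thesis unfolding r_def x'0 wedge_monom_left y'_def m_def wedge_monom_right by simp
    next
      case False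
      thus ?thesis unfolding r_def x'0 wedge_monom_left y'_def m_def wedge_monom_right
        using ij by auto
    qed
    thus ?thesis using lhs by simp
  qed
  have "wedge x (monom T') \<in> L"
  proof (cases "r = (\<lambda>S. 0)")
    case True
    then have "wedge x (monom T') = (\<lambda>S. 0)" using key by auto
    thus ?thesis using Lsub(1) unfolding is_subspace_def by simp
  next
    case False
    have "m \<noteq> (\<lambda>S. 0)"
    proof
      assume "m = (\<lambda>S. 0)"
      then have "r = (\<lambda>S. 0)" unfolding r_def x'0 y'_def by (auto simp: wedge_monom_left)
      thus False using False by simp
    qed
    moreover have "slow_shift j i m = (if r \<noteq> (\<lambda>S. 0) then r else wedge (monom {j}) y')"
      unfolding slow_shift_def Let_def x'_def y'_def r_def by simp
    ultimately have ss: "slow_shift j i m = r" "m \<noteq> (\<lambda>S. 0)" using False by auto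
    have mL': "m \<in> L" using mL m_def by simp
    have "r \<in> {slow_shift j i m | m. m \<in> L \<and> m \<noteq> (\<lambda>S. 0)}"
      using ss mL' by blast
    moreover have "r = (\<lambda>S. \<Sum>m\<in>{r}. 1 * m S)" by simp
    ultimately have "r \<in> slow_shift_space j i L"
      unfolding slow_shift_space_def lin_span_def
      by (intro CollectI exI[of _ "{r}"] exI[of _ "\<lambda>_. 1"]) blast
    then have "r \<in> L" using shiftinv i j ij by auto
    then have "(\<lambda>S. c * r S) \<in> L" using Lsub(1) unfolding is_subspace_def by blast
    moreover have "(\<lambda>S. c * r S) = wedge x (monom T')" using key by auto
    ultimately show ?thesis by simp
  qed
  thus "insert i (T - {j}) \<in> {T. monom T \<in> ext_sub n ({1..n} - I) \<and> wedge x (monom T) \<in> L}"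
    using T'I I T'_def R_def by (auto simp: monom_ext_sub)
qed

end
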